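(* Let $\Omega\in\mathscr A$ be a $1$-admissible set with $\mathfrak m(\Omega)\in(0,+\infty)$ and $\mathscr C_1(\Omega)\neq\emptyset$. If (P.4) and (P.5) hold, then there exist $1$-Cheeger sets of $\Omega$ of maximal $\mathfrak m$-measure among all $1$-Cheeger sets of $\Omega$. If moreover (P.3) holds, then there is a unique (up to $\mathfrak m$-negligible sets) $1$-Cheeger set $E^+$ of maximal measure, and $E\subset E^+$ (i.e. $\mathfrak m(E\setminus E^+)=0$) for every $E\in\mathscr C_1(\Omega)$.
   Context: $(X,\mathscr A,\mathfrak m)$ is a non-negative $\sigma$-finite measure space; for $A,B\in\mathscr A$, "$A\subset B$" means $\mathfrak m(A\setminus B)=0$. $P\colon\mathscr A\to[0,+\infty]$ is a proper functional. (P.3): $P(E\cap F)+P(E\cup F)\le P(E)+P(F)$. (P.4): if $\chi_{E_k}\to\chi_E$ in $L^1(X,\mathfrak m)$ then $P(E)\le\liminf_k P(E_k)$. (P.5): for every $c\ge0$, $\{\chi_E:E\in\mathscr A,\ P(E)\le c\}$ is compact in $L^1(X,\mathfrak m)$. $\Omega$ is $1$-admissible if it contains some $E$ with $0<\mathfrak m(E)<+\infty$, $P(E)<+\infty$; $h_1(\Omega)=\inf\{P(E)/\mathfrak m(E): E\subset\Omega,\ 0<\mathfrak m(E)<+\infty,\ P(E)<+\infty\}$; minimizers are $1$-Cheeger sets, forming $\mathscr C_1(\Omega)$. *)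

theory Defs
  imports "HOL-Analysis.Analysis"
begin

definition proper_functional :: "'a measure \<Rightarrow> ('a set \<Rightarrow> ennreal) \<Rightarrow> bool" where
  "proper_functional M P \<longleftrightarrow> (\<exists>E\<in>sets M. P E < \<infinity>)"

definition chi_L1_conv :: "'a measure \<Rightarrow> (nat \<Rightarrow> 'a set) \<Rightarrow> 'a set \<Rightarrow> bool" where
  "chi_L1_conv M Es E \<longleftrightarrow>
     (\<lambda>k. \<integral>\<^sup>+ x. ennreal \<bar>indicator (Es k) x - indicator E x :: real\<bar> \<partial>M) \<longlonglongrightarrow> 0"

definition P3 :: "'a measure \<Rightarrow> ('a set \<Rightarrow> ennreal) \<Rightarrow> bool" where
  "P3 M P \<longleftrightarrow> (\<forall>E\<in>sets M. \<forall>F\<in>sets M. P (E \<inter> F) + P (E \<union> F) \<le> P E + P F)"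

definition P4 :: "'a measure \<Rightarrow> ('a set \<Rightarrow> ennreal) \<Rightarrow> bool" where
  "P4 M P \<longleftrightarrow> (\<forall>Es E. (\<forall>k. Es k \<in> sets M) \<longrightarrow> E \<in> sets M \<longrightarrow> chi_L1_conv M Es E
      \<longrightarrow> P E \<le> liminf (\<lambda>k. P (Es k)))"

definition P5 :: "'a measure \<Rightarrow> ('a set \<Rightarrow> ennreal) \<Rightarrow> bool" where
  "P5 M P \<longleftrightarrow> (\<forall>c::real. c \<ge> 0 \<longrightarrow> (\<forall>Es. (\<forall>k. Es k \<in> sets M \<and> P (Es k) \<le> ennreal c) \<longrightarrow>
      (\<exists>(r::nat \<Rightarrow> nat) E. strict_mono r \<and> E \<in> sets M \<and> P E \<le> ennreal c \<and> chi_L1_conv M (Es \<circ> r) E)))"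

definition competitors :: "'a measure \<Rightarrow> ('a set \<Rightarrow> ennreal) \<Rightarrow> 'a set \<Rightarrow> 'a set set" where
  "competitors M P \<Omega> = {E \<in> sets M. emeasure M (E - \<Omega>) = 0 \<and> 0 < emeasure M E \<and>
      emeasure M E < \<infinity> \<and> P E < \<infinity>}"

definition one_admissible :: "'a measure \<Rightarrow> ('a set \<Rightarrow> ennreal) \<Rightarrow> 'a set \<Rightarrow> bool" where
  "one_admissible M P \<Omega> \<longleftrightarrow> (\<exists>E\<in>sets M. emeasure M (E - \<Omega>) = 0 \<and> 0 < emeasure M E \<and> emeasure M E < \<infinity> \<and> P E < \<infinity>)"

definition h1 :: "'a measure \<Rightarrow> ('a set \<Rightarrow> ennreal) \<Rightarrow> 'a set \<Rightarrow> ennreal" where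
  "h1 M P \<Omega> = (INF E\<in>competitors M P \<Omega>. P E / emeasure M E)"

definition cheeger1 :: "'a measure \<Rightarrow> ('a set \<Rightarrow> ennreal) \<Rightarrow> 'a set \<Rightarrow> 'a set set" where
  "cheeger1 M P \<Omega> = {E \<in> competitors M P \<Omega>. P E / emeasure M E = h1 M P \<Omega>}"

end

theory Submission
  imports Defs
begin

lemma cheeger_eq:
  assumes "E \<in> cheeger1 M P \<Omega>"
  shows "P E = h1 M P \<Omega> * emeasure M E"
proof -
  from assms have e: "E \<in> competitors M P \<Omega>" and q: "P E / emeasure M E = h1 M P \<Omega>"
    by (auto simp: cheeger1_def)
  from e have "emeasure M E \<noteq> 0" "emeasure M E < \<infinity>" by (auto simp: competitors_def)
  then have "P E = P E / emeasure M E * emeasure M E"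
    by (simp add: ennreal_divide_times)
  with q show ?thesis by simp
qed

lemma comp_ge:
  assumes "E \<in> competitors M P \<Omega>"
  shows "h1 M P \<Omega> * emeasure M E \<le> P E"
proof -
  have "h1 M P \<Omega> \<le> P E / emeasure M E" unfolding h1_def using assms by (rule INF_lower)
  then have "h1 M P \<Omega> * emeasure M E \<le> P E / emeasure M E * emeasure M E"
    by (rule mult_right_mono) simp
  moreover from assms have "emeasure M E \<noteq> 0" "emeasure M E < \<infinity>" by (auto simp: competitors_def)
  ultimately show ?thesis by (simp add: ennreal_divide_times)
qed

lemma cheeger_of_le:
  assumes "E \<in> competitors M P \<Omega>" "P E \<le> h1 M P \<Omega> * emeasure M E"
  shows "E \<in> cheeger1 M P \<Omega>"
proof -
  have a: "h1 M P \<Omega> \<le> P E / emeasure M E" unfolding h1_def using assms by (intro INF_lower)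
  from assms have "emeasure M E \<noteq> 0" "emeasure M E \<noteq> \<infinity>" by (auto simp: competitors_def)
  moreover have "P E / emeasure M E \<le> h1 M P \<Omega> * emeasure M E / emeasure M E"
    using assms(2) by (rule divide_right_mono_ennreal)
  ultimately have "P E / emeasure M E \<le> h1 M P \<Omega>" by (simp add: ennreal_mult_divide_eq)
  with a assms show ?thesis by (auto simp: cheeger1_def)
qed

lemma meas_le_diff:
  assumes "A \<in> sets M" "B \<in> sets M"
  shows "emeasure M A \<le> emeasure M B + emeasure M (A - B)"
proof -
  have "emeasure M A \<le> emeasure M (B \<union> (A - B))" using assms by (intro emeasure_mono) auto
  also have "\<dots> \<le> emeasure M B + emeasure M (A - B)" using assms by (intro emeasure_subadditive) auto
  finally show ?thesis .
qed

lemma le_Om: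
  assumes "E \<in> competitors M P \<Omega>" "\<Omega> \<in> sets M"
  shows "emeasure M E \<le> emeasure M \<Omega>"
  using meas_le_diff[of E M \<Omega>] assms by (auto simp: competitors_def)

lemma diff_le_L1:
  assumes "A \<in> sets M" "B \<in> sets M"
  shows "emeasure M (A - B) \<le> (\<integral>\<^sup>+ x. ennreal \<bar>indicator B x - indicator A x :: real\<bar> \<partial>M)"
proof -
  have "emeasure M (A - B) = (\<integral>\<^sup>+ x. indicator (A - B) x \<partial>M)" using assms by simp
  also have "\<dots> \<le> (\<integral>\<^sup>+ x. ennreal \<bar>indicator B x - indicator A x :: real\<bar> \<partial>M)"
    by (intro nn_integral_mono) (auto simp: indicator_def)
  finally show ?thesis .
qed

lemma diff_le_L1':
  assumes "A \<in> sets M" "B \<in> sets M"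
  shows "emeasure M (A - B) \<le> (\<integral>\<^sup>+ x. ennreal \<bar>indicator A x - indicator B x :: real\<bar> \<partial>M)"
  using diff_le_L1[OF assms] by (simp add: abs_minus_commute)

lemma union_cheeger:
  assumes P3: "P3 M P" and E: "E \<in> cheeger1 M P \<Omega>" and F: "F \<in> cheeger1 M P \<Omega>"
    and Om: "\<Omega> \<in> sets M"
  shows "E \<union> F \<in> cheeger1 M P \<Omega>"
proof -
  let ?h = "h1 M P \<Omega>"
  have Ec: "E \<in> competitors M P \<Omega>" and Fc: "F \<in> competitors M P \<Omega>"
    using E F by (auto simp: cheeger1_def)
  have Es: "E \<in> sets M" and Fs: "F \<in> sets M" using Ec Fc by (auto simp: competitors_def)
  have PE: "P E = ?h * emeasure M E" and PF: "P F = ?h * emeasure M F"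
    using cheeger_eq E F by auto
  have sub: "P (E \<inter> F) + P (E \<union> F) \<le> P E + P F" using P3 Es Fs by (auto simp: P3_def)
  have fin: "P E + P F < \<infinity>" using Ec Fc by (auto simp: competitors_def)
  have "P (E \<union> F) \<le> P (E \<inter> F) + P (E \<union> F)" by (rule add_increasing) auto
  then have PU: "P (E \<union> F) < \<infinity>" using sub fin by (meson order_le_less_trans order_trans)
  have "P (E \<inter> F) \<le> P (E \<inter> F) + P (E \<union> F)" by (rule add_increasing2) auto
  then have PI: "P (E \<inter> F) < \<infinity>" using sub fin by (meson order_le_less_trans order_trans)
  have "emeasure M ((E \<union> F) - \<Omega>) \<le> emeasure M (E - \<Omega>) + emeasure M (F - \<Omega>)"
  proof -
    have "(E \<union> F) - \<Omega> = (E - \<Omega>) \<union> (F - \<Omega>)" by auto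
    then show ?thesis using Es Fs Om by (simp add: emeasure_subadditive sets.Diff)
  qed
  then have n1: "emeasure M ((E \<union> F) - \<Omega>) = 0" using Ec Fc by (simp add: competitors_def)
  have "emeasure M E \<le> emeasure M (E \<union> F)" using Es Fs by (intro emeasure_mono) auto
  then have p1: "0 < emeasure M (E \<union> F)" using Ec by (auto simp: competitors_def)
  have "emeasure M (E \<union> F) \<le> emeasure M E + emeasure M F" using Es Fs by (intro emeasure_subadditive)
  then have f1: "emeasure M (E \<union> F) < \<infinity>" using Ec Fc
    by (auto simp: competitors_def intro: le_less_trans)
  have Uc: "E \<union> F \<in> competitors M P \<Omega>" using n1 p1 f1 PU Es Fs by (auto simp: competitors_def)
  have UI: "emeasure M E + emeasure M F = emeasure M (E \<union> F) + emeasure M (E \<inter> F)"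
    using Es Fs by (rule emeasure_Un_Int)
  have "P (E \<union> F) \<le> ?h * emeasure M (E \<union> F)"
  proof (cases "emeasure M (E \<inter> F) = 0")
    case True
    have "P (E \<union> F) \<le> P (E \<inter> F) + P (E \<union> F)" by (rule add_increasing) auto
    also have "\<dots> \<le> P E + P F" by (rule sub)
    also have "\<dots> = ?h * (emeasure M E + emeasure M F)" by (simp add: PE PF distrib_left)
    also have "\<dots> = ?h * emeasure M (E \<union> F)" using UI True by simp
    finally show ?thesis .
  next
    case False
    have "emeasure M (E \<inter> F) \<le> emeasure M E" using Es by (intro emeasure_mono) auto
    then have "emeasure M (E \<inter> F) < \<infinity>" using Ec by (auto simp: competitors_def intro: le_less_trans)
    moreover have "emeasure M ((E \<inter> F) - \<Omega>) \<le> emeasure M (E - \<Omega>)" using Es Om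
      by (intro emeasure_mono) auto
    ultimately have Ic: "E \<inter> F \<in> competitors M P \<Omega>" using False PI Es Fs Ec
      by (auto simp: competitors_def zero_less_iff_neq_zero)
    have "?h * emeasure M (E \<inter> F) + P (E \<union> F) \<le> P (E \<inter> F) + P (E \<union> F)"
      using comp_ge[OF Ic] by (rule add_right_mono)
    also have "\<dots> \<le> P E + P F" by (rule sub)
    also have "\<dots> = ?h * (emeasure M E + emeasure M F)" by (simp add: PE PF distrib_left)
    also have "\<dots> = ?h * emeasure M (E \<inter> F) + ?h * emeasure M (E \<union> F)" using UI
      by (simp add: distrib_left add.commute)
    finally have le: "?h * emeasure M (E \<inter> F) + P (E \<union> F) \<le> ?h * emeasure M (E \<inter> F) + ?h * emeasure M (E \<union> F)" .
    have "?h * emeasure M (E \<inter> F) \<le> P (E \<inter> F)" using comp_ge[OF Ic] .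
    then have "?h * emeasure M (E \<inter> F) \<noteq> \<infinity>" using PI by auto
    with le show ?thesis by (simp add: ennreal_add_left_cancel_le)
  qed
  then show ?thesis using Uc by (rule cheeger_of_le[rotated])
qed

theorem proposition3p13:
  fixes M :: "'a measure" and P :: "'a set \<Rightarrow> ennreal" and \<Omega> :: "'a set"
  assumes "sigma_finite_measure M"
    and "proper_functional M P"
    and "\<Omega> \<in> sets M"
    and "one_admissible M P \<Omega>"
    and "0 < emeasure M \<Omega>" and "emeasure M \<Omega> < \<infinity>"
    and "cheeger1 M P \<Omega> \<noteq> {}"
    and "P4 M P" and "P5 M P"
  shows "(\<exists>E\<in>cheeger1 M P \<Omega>. \<forall>F\<in>cheeger1 M P \<Omega>. emeasure M F \<le> emeasure M E)
    \<and> (P3 M P \<longrightarrow>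
        (\<exists>Ep\<in>cheeger1 M P \<Omega>. (\<forall>F\<in>cheeger1 M P \<Omega>. emeasure M F \<le> emeasure M Ep)
          \<and> (\<forall>F\<in>cheeger1 M P \<Omega>. emeasure M F = emeasure M Ep \<longrightarrow>
                emeasure M ((F - Ep) \<union> (Ep - F)) = 0)
          \<and> (\<forall>E\<in>cheeger1 M P \<Omega>. emeasure M (E - Ep) = 0)))"
proof -
  let ?m = "emeasure M" and ?h = "h1 M P \<Omega>" and ?C = "cheeger1 M P \<Omega>"
  note Om = assms(3)
  obtain E0 where E0: "E0 \<in> ?C" using assms(7) by auto
  have E0c: "E0 \<in> competitors M P \<Omega>" and E0q: "P E0 / ?m E0 = ?h" using E0 by (auto simp: cheeger1_def)
  have hfin: "?h \<noteq> \<infinity>" using E0c E0q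
    by (auto simp: competitors_def ennreal_divide_eq_top_iff)
  have Csets: "E \<in> sets M" if "E \<in> ?C" for E using that by (auto simp: cheeger1_def competitors_def)
  have CleOm: "?m E \<le> ?m \<Omega>" if "E \<in> ?C" for E
    using that Om le_Om[of E M P \<Omega>] by (auto simp: cheeger1_def)
  have part1: "\<exists>E\<in>?C. \<forall>F\<in>?C. ?m F \<le> ?m E"
  proof -
    define S where "S = Sup (?m ` ?C)"
    obtain f where f: "incseq f" "range f \<subseteq> ?m ` ?C" "S = (SUP i. f i)"
      using ennreal_Sup_countable_SUP[of "?m ` ?C"] assms(7) unfolding S_def by auto
    have flim: "f \<longlonglongrightarrow> S" using f by (simp add: LIMSEQ_SUP)
    have "\<forall>k. \<exists>E. E \<in> ?C \<and> f k = ?m E" using f(2) by blast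
    then obtain Es where Es: "\<And>k. Es k \<in> ?C" "\<And>k. f k = ?m (Es k)" by metis
    have SleOm: "S \<le> ?m \<Omega>" unfolding S_def using CleOm by (auto intro: Sup_least)
    have Sge: "?m E0 \<le> S" unfolding S_def using E0 by (auto intro: Sup_upper)
    have Spos: "0 < S" using Sge E0c by (auto simp: competitors_def)
    have hOm: "?h * ?m \<Omega> < \<infinity>" using hfin assms(6)
      by (simp add: ennreal_mult_less_top top.not_eq_extremum)
    define c where "c = enn2real (?h * ?m \<Omega>)"
    have cc: "ennreal c = ?h * ?m \<Omega>" unfolding c_def using hOm by simp
    have PEs: "P (Es k) \<le> ennreal c" for k
    proof -
      have "P (Es k) = ?h * ?m (Es k)" using cheeger_eq Es(1) by blast
      also have "\<dots> \<le> ?h * ?m \<Omega>" using CleOm[OF Es(1)] by (rule mult_left_mono) simp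
      finally show ?thesis using cc by simp
    qed
    have "c \<ge> 0" unfolding c_def by simp
    then obtain r E where rE: "strict_mono r" "E \<in> sets M" "P E \<le> ennreal c"
        "chi_L1_conv M (Es \<circ> r) E"
      using assms(9) PEs Csets[OF Es(1)] unfolding P5_def by blast
    define d where "d k = (\<integral>\<^sup>+ x. ennreal \<bar>indicator (Es (r k)) x - indicator E x :: real\<bar> \<partial>M)" for k
    have dlim: "d \<longlonglongrightarrow> 0" using rE(4) unfolding chi_L1_conv_def d_def by simp
    have mlim: "(\<lambda>k. ?m (Es (r k))) \<longlonglongrightarrow> S"
      using LIMSEQ_subseq_LIMSEQ[OF flim rE(1)] Es(2) by (simp add: o_def)
    have b1: "?m E \<le> ?m (Es (r k)) + d k" for k
      using meas_le_diff[OF rE(2) Csets[OF Es(1)]] diff_le_L1[OF rE(2) Csets[OF Es(1)]]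
      unfolding d_def by (meson add_left_mono order_trans)
    have b2: "?m (Es (r k)) \<le> ?m E + d k" for k
      using meas_le_diff[OF Csets[OF Es(1)] rE(2)] diff_le_L1'[OF Csets[OF Es(1)] rE(2)]
      unfolding d_def by (meson add_left_mono order_trans)
    have sumlim: "(\<lambda>k. ?m (Es (r k)) + d k) \<longlonglongrightarrow> S + 0" using mlim dlim by (rule tendsto_add)
    have "?m E \<le> S" using LIMSEQ_le_const[OF sumlim] b1 by auto
    moreover have "S \<le> ?m E + 0"
      using LIMSEQ_le[OF mlim tendsto_add[OF tendsto_const dlim]] b2 by auto
    ultimately have mE: "?m E = S" by simp
    have b3: "?m (E - \<Omega>) \<le> d k" for k
    proof -
      have Ek: "Es (r k) \<in> sets M" using Csets[OF Es(1)] .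
      have "?m (E - \<Omega>) \<le> ?m ((E - Es (r k)) \<union> (Es (r k) - \<Omega>))"
        using Ek rE(2) Om by (intro emeasure_mono) auto
      also have "\<dots> \<le> ?m (E - Es (r k)) + ?m (Es (r k) - \<Omega>)"
        using Ek rE(2) Om by (intro emeasure_subadditive) auto
      also have "\<dots> = ?m (E - Es (r k))" using Es(1)[of "r k"] by (simp add: cheeger1_def competitors_def)
      also have "\<dots> \<le> d k" unfolding d_def by (rule diff_le_L1[OF rE(2) Ek])
      finally show ?thesis .
    qed
    have "?m (E - \<Omega>) \<le> 0" using LIMSEQ_le_const[OF dlim] b3 by auto
    then have n0: "?m (E - \<Omega>) = 0" by simp
    have Plim: "(\<lambda>k. P ((Es \<circ> r) k)) \<longlonglongrightarrow> ?h * S"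
    proof -
      have "(\<lambda>k. ?h * ?m (Es (r k))) \<longlonglongrightarrow> ?h * S"
        using Spos hfin SleOm assms(6) by (intro tendsto_mult_ennreal tendsto_const mlim) auto
      moreover have "P ((Es \<circ> r) k) = ?h * ?m (Es (r k))" for k using cheeger_eq[OF Es(1)[of "r k"]] by simp
      ultimately show ?thesis by simp
    qed
    have "P E \<le> liminf (\<lambda>k. P ((Es \<circ> r) k))"
    proof -
      have "\<forall>k. (Es \<circ> r) k \<in> sets M" using Csets[OF Es(1)] by simp
      then show ?thesis using assms(8) rE(2,4) unfolding P4_def by blast
    qed
    also have "\<dots> = ?h * S" using Plim by (simp add: lim_imp_Liminf)
    finally have PE: "P E \<le> ?h * ?m E" using mE by simp
    have Ec: "E \<in> competitors M P \<Omega>"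
      using rE(2,3) n0 mE Spos SleOm assms(6) by (auto simp: competitors_def intro: le_less_trans)
    have EC: "E \<in> ?C" using cheeger_of_le[OF Ec PE] .
    have "\<forall>F\<in>?C. ?m F \<le> ?m E" unfolding mE S_def by (auto intro: SUP_upper)
    then show ?thesis using EC by blast
  qed
  moreover have "P3 M P \<longrightarrow>
        (\<exists>Ep\<in>?C. (\<forall>F\<in>?C. ?m F \<le> ?m Ep)
          \<and> (\<forall>F\<in>?C. ?m F = ?m Ep \<longrightarrow> ?m ((F - Ep) \<union> (Ep - F)) = 0)
          \<and> (\<forall>E\<in>?C. ?m (E - Ep) = 0))"
  proof
    assume P3: "P3 M P"
    from part1 obtain Ep where Ep: "Ep \<in> ?C" "\<And>F. F \<in> ?C \<Longrightarrow> ?m F \<le> ?m Ep" by blast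
    have Epfin: "?m Ep \<noteq> \<infinity>" using Ep(1) by (auto simp: cheeger1_def competitors_def)
    have incl: "?m (E - Ep) = 0" if E: "E \<in> ?C" for E
    proof -
      have "?m (E \<union> Ep) \<le> ?m Ep" using Ep(2) union_cheeger[OF P3 E Ep(1) Om] by blast
      moreover have "?m (E \<union> Ep) = ?m Ep + ?m (E - Ep)"
        using emeasure_Un[OF Csets[OF Ep(1)] Csets[OF E]] by (simp add: Un_commute)
      ultimately have "?m Ep + ?m (E - Ep) \<le> ?m Ep + 0" by simp
      then show ?thesis using Epfin by (simp add: ennreal_add_left_cancel_le)
    qed
    have uniq: "?m ((F - Ep) \<union> (Ep - F)) = 0" if F: "F \<in> ?C" "?m F = ?m Ep" for F
    proof -
      have Ffin: "?m F \<noteq> \<infinity>" using F Epfin by simp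
      have "?m (F \<union> Ep) \<le> ?m Ep" using Ep(2) union_cheeger[OF P3 F(1) Ep(1) Om] by blast
      moreover have "?m (F \<union> Ep) = ?m F + ?m (Ep - F)"
        using emeasure_Un[OF Csets[OF F(1)] Csets[OF Ep(1)]] by simp
      ultimately have "?m F + ?m (Ep - F) \<le> ?m F + 0" using F(2) by simp
      then have z: "?m (Ep - F) = 0" using Ffin by (simp add: ennreal_add_left_cancel_le)
      have "?m ((F - Ep) \<union> (Ep - F)) \<le> ?m (F - Ep) + ?m (Ep - F)"
        using Csets[OF F(1)] Csets[OF Ep(1)] by (intro emeasure_subadditive) auto
      then show ?thesis using z incl[OF F(1)] by simp
    qed
    show "\<exists>Ep\<in>?C. (\<forall>F\<in>?C. ?m F \<le> ?m Ep)
          \<and> (\<forall>F\<in>?C. ?m F = ?m Ep \<longrightarrow> ?m ((F - Ep) \<union> (Ep - F)) = 0)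
          \<and> (\<forall>E\<in>?C. ?m (E - Ep) = 0)"
      using Ep uniq incl by blast
  qed
  ultimately show ?thesis by blast
qed

end
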